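(* For every integer $n\ge1$, \[ \frac{1}{n+1}\sum_{j=0}^{n}\sum_{i=0}^{j}\frac{\binom{3n+2}{i}}{\binom{2n+1}{j}}=2^{n}\left(\frac34+\sum_{k=1}^{n-1}\frac{1}{2^{k}k}\left(1-\frac{5k+12}{8k+12}\,\frac{\binom{3k+2}{k}}{\binom{2k+1}{k}}\right)\right). \]
   Context: Empty sums are $0$. *)

theory Defs
  imports Complex_Main
begin

end

theory Submission
  imports Defs
begin

definition pp :: "nat \<Rightarrow> nat \<Rightarrow> real" where
  "pp m j = (\<Sum>i=0..j. real (m choose i))"

lemma pp_0: "pp m 0 = 1" by (simp add: pp_def)
lemma pp_Suc_j: "pp m (Suc j) = pp m j + real (m choose Suc j)"
  by (simp add: pp_def)

lemma pp_Suc_m: "pp (Suc m) j = 2 * pp m j - real (m choose j)"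
proof (induction j)
  case 0 then show ?case by (simp add: pp_0)
next
  case (Suc j)
  then show ?case by (simp add: pp_Suc_j algebra_simps)
qed

lemma pp3: "pp (m+3) j = 8 * pp m j - 4 * real (m choose j) - 2 * real (Suc m choose j) - real (Suc (Suc m) choose j)"
proof -
  have "m + 3 = Suc (Suc (Suc m))" by simp
  then show ?thesis by (simp only: pp_Suc_m) (simp add: algebra_simps)
qed

lemma B1: assumes lt: "j \<le> m"
  shows "real (Suc m choose j) = (real m + 1) * real (m choose j) / (real m + 1 - real j)"
proof -
  have "(Suc m - j) * (Suc m choose j) = Suc m * (m choose j)"
    using binomial_absorb_comp[of "Suc m" j] by simp
  then have "real (Suc m - j) * real (Suc m choose j) = real (Suc m) * real (m choose j)"
    by (metis of_nat_mult)
  moreover have "real (Suc m - j) = real m + 1 - real j" using lt by (simp add: of_nat_diff)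
  moreover have "real m + 1 - real j \<noteq> 0" using lt by simp
  ultimately show ?thesis by (simp add: field_simps)
qed

lemma B1c: assumes "j \<le> m"
  shows "real (Suc m choose j) = real (m choose j) * (real m + 1) / (real m + 1 - real j)"
  using B1[OF assms] by (simp add: ac_simps)

lemma B2: assumes "j < m"
  shows "real (m choose Suc j) = real (m choose j) * (real m - real j) / (real j + 1)"
proof -
  have "Suc j * (m choose Suc j) = (m - j) * (m choose j)"
    using binomial_absorption[of j m] binomial_absorb_comp[of m j] by simp
  then have "(real j + 1) * real (m choose Suc j) = real (m - j) * real (m choose j)"
    by (metis of_nat_Suc of_nat_mult add.commute)
  moreover have "real (m - j) = real m - real j" using assms by (simp add: of_nat_diff)
  ultimately show ?thesis by (simp add: field_simps)
qed

definition NQ :: "real \<Rightarrow> real \<Rightarrow> real" where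
 "NQ b a = 72*b^4+222*b^3+114*b^2-180*b-144 + (-60*b^3-107*b^2+31*b+84)*a + (17*b^2+13*b-12)*a^2 - 2*b*a^3"

lemma pB: fixes a b :: real shows
 "-b*(2*b+3-a)*(2*b+2-a)*(4*(3*b+3-a)*(3*b+4-a) + 2*(3*b+3)*(3*b+4-a) + (3*b+4)*(3*b+3))
   = 2*b*(3*b+3-a)*(3*b+4-a)*(2*a-6*b-8)*(3*b+2-a) + (3*b+4-a)*NQ b (a+1) - (2*b+2-a)*NQ b a"
  unfolding NQ_def by (simp add: algebra_simps power2_eq_square power3_eq_cube power4_eq_xxxx)

lemma cA:
  fixes a b m1 m2 m3 e f :: real
  assumes nz: "m1 \<noteq> 0" "e \<noteq> 0" "f \<noteq> 0"
   and d: "m1 = 2*b+1-a" "m2 = 2*b+2-a" "m3 = 2*b+3-a" "e = 2*b+3" "f = b+1"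
  shows "8*(m3*m2/(2*e*f)) - 2*(b+2)/f = (m1*((2*a-6*b-8)/(e*f)))*(a+1)/m1 - m2*((2*a-6*b-10)/(e*f))"
  using nz apply (simp add: field_simps)
  unfolding d by (simp add: algebra_simps)

lemma cB:
  fixes a b p q4 n2 m1 m2 m3 e f :: real
  assumes nz: "p \<noteq> 0" "q4 \<noteq> 0" "n2 \<noteq> 0" "m1 \<noteq> 0" "e \<noteq> 0" "f \<noteq> 0" "b \<noteq> 0"
   and d: "p = 3*b+3-a" "q4 = 3*b+4-a" "n2 = 3*b+2-a" "m1 = 2*b+1-a" "m2 = 2*b+2-a" "m3 = 2*b+3-a" "e = 2*b+3" "f = b+1"
  shows "-(m3*m2/(2*e*f)) * (4 + 2*(3*b+3)/p + (3*b+4)*(3*b+3)/(q4*p))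
     = (m1*((2*a-6*b-8)/(e*f)))*n2/m1 + (m1*NQ b (a+1)/(2*b*f*e*n2*p))*n2/m1 - m2*NQ b a/(2*b*f*e*p*q4)"
proof -
  have s1: "-(m3*m2/(2*e*f)) * (4 + 2*(3*b+3)/p + (3*b+4)*(3*b+3)/(q4*p))
     = (-b*m3*m2*(4*p*q4 + 2*(3*b+3)*q4 + (3*b+4)*(3*b+3)))/(2*b*f*e*p*q4)"
    using nz by (simp add: field_simps)
  have s2: "(m1*((2*a-6*b-8)/(e*f)))*n2/m1 + (m1*NQ b (a+1)/(2*b*f*e*n2*p))*n2/m1 - m2*NQ b a/(2*b*f*e*p*q4)
     = (2*b*p*q4*(2*a-6*b-8)*n2 + q4*NQ b (a+1) - m2*NQ b a)/(2*b*f*e*p*q4)"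
    using nz by (simp add: field_simps)
  have s3: "-b*m3*m2*(4*p*q4 + 2*(3*b+3)*q4 + (3*b+4)*(3*b+3)) = 2*b*p*q4*(2*a-6*b-8)*n2 + q4*NQ b (a+1) - m2*NQ b a"
    unfolding d using pB[of b a] by simp
  show ?thesis unfolding s1 s2 s3 ..
qed
lemma gen1:
  fixes X y y1 y2 z z1 z2 b p q4 m2 m3 e f :: real
  assumes nz: "p \<noteq> 0" "q4 \<noteq> 0" "m2 \<noteq> 0" "m3 \<noteq> 0" "e \<noteq> 0" "f \<noteq> 0" "z \<noteq> 0"
   and d: "e = 2*b+3" "f = b+1"
   and h: "y1 = y*(3*b+3)/p" "y2 = y1*(3*b+4)/q4" "z1 = z*(2*b+2)/m2" "z2 = z1*(2*b+3)/m3"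
  shows "(8*X - 4*y - 2*y1 - y2)/z2 = (8*X - (4 + 2*(3*b+3)/p + (3*b+4)*(3*b+3)/(q4*p))*y) * (m3*m2/(2*e*f)) / z"
proof -
  have "2*b+2 = 2*f" "2*b+3 = e" using d by simp_all
  then have h': "y1 = y*(3*b+3)/p" "y2 = y1*(3*b+4)/q4" "z1 = z*(2*f)/m2" "z2 = z1*e/m3"
    using h by simp_all
  show ?thesis unfolding h' using nz by (simp add: field_simps)
qed

lemma comb:
  fixes X y z W h c a n2 m1 al0 al1 be0 be1 :: real
  assumes nz: "z \<noteq> 0" "m1 \<noteq> 0"
   and hA: "8*W - c = al1*(a+1)/m1 - al0"
   and hB: "-W*h = al1*n2/m1 + be1*n2/m1 - be0"
  shows "(8*X - h*y)*W/z = c*(X/z) + ((al1*((X*(a+1)+y*n2)/(z*m1)) + be1*(y*n2/(z*m1))) - (al0*(X/z) + be0*(y/z)))"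
proof -
  have 1: "(8*X - h*y)*W/z = X/z*(8*W - c) + y/z*(-W*h) + c*(X/z)" using nz by (simp add: field_simps)
  have 2: "(al1*((X*(a+1)+y*n2)/(z*m1)) + be1*(y*n2/(z*m1))) - (al0*(X/z) + be0*(y/z))
      = X/z*(al1*(a+1)/m1 - al0) + y/z*(al1*n2/m1 + be1*n2/m1 - be0)" using nz by (simp add: field_simps)
  show ?thesis unfolding 1 2 hA hB by simp
qed
definition vv :: "real \<Rightarrow> real \<Rightarrow> real" where
 "vv b a = (2*a-6*b-10)/((2*b+3)*(b+1))"
definition gg :: "real \<Rightarrow> real \<Rightarrow> real" where
 "gg b a = (2*b+2-a)*NQ b a/(2*b*(b+1)*(2*b+3)*(3*b+3-a)*(3*b+4-a))"
definition WW :: "real \<Rightarrow> real \<Rightarrow> real" where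
 "WW b a = (2*b+3-a)*(2*b+2-a)/(2*(2*b+3)*(b+1))"
definition hh :: "real \<Rightarrow> real \<Rightarrow> real" where
 "hh b a = 4 + 2*(3*b+3)/(3*b+3-a) + (3*b+4)*(3*b+3)/((3*b+4-a)*(3*b+3-a))"

lemma bX_atom: fixes b e f :: real assumes nz: "e \<noteq> 0" "f \<noteq> 0" and d: "e = 2*b+3" "f = b+1"
  shows "(b+1)*((2*(b+1)-6*b-10)/(e*f)) + 8*((2*b+3-(b+1))*(2*b+2-(b+1))/(2*e*f)) = 0"
  using nz by (simp add: field_simps)

lemma bX: assumes "b \<ge> 1" shows "(b+1)*vv b (b+1) + 8*WW b (b+1) = 0"
  unfolding vv_def WW_def by (rule bX_atom) (use assms in simp_all)

lemma bC_atom: fixes b e f p q :: real assumes nz: "e \<noteq> 0" "f \<noteq> 0" "p \<noteq> 0" "q \<noteq> 0" "b \<noteq> 0"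
  and d: "e = 2*b+3" "f = b+1" "p = 3*b+3-0" "q = 3*b+4-0"
  shows "-(2*b+2)*((2*0-6*b-10)/(e*f)) - (2*b+2-0)*NQ b 0/(2*b*f*e*p*q) = 2*(b+2)/b"
  using nz apply (simp add: field_simps) unfolding d NQ_def by (simp add: algebra_simps power2_eq_square power3_eq_cube power4_eq_xxxx)

lemma bC: assumes "b \<ge> 1" shows "-(2*b+2)*vv b 0 - gg b 0 = 2*(b+2)/b"
  unfolding vv_def gg_def by (rule bC_atom) (use assms in simp_all)

lemma bT_atom: fixes b e f p q g :: real assumes nz: "e \<noteq> 0" "f \<noteq> 0" "p \<noteq> 0" "q \<noteq> 0" "b \<noteq> 0" "g \<noteq> 0"
  and d: "e = 2*b+3" "f = b+1" "p = 3*b+3-(b+1)" "q = 3*b+4-(b+1)" "g = 8*b+12"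
  shows "2*((2*b+2-(b+1))*NQ b (b+1)/(2*b*f*e*p*q)) - 2*(4 + 2*(3*b+3)/p + (3*b+4)*(3*b+3)/(q*p))*((2*b+3-(b+1))*(2*b+2-(b+1))/(2*e*f))
     = -(2*(b+2)*(5*b+12)/(b*g))"
  using nz apply (simp add: field_simps) unfolding d NQ_def by (simp add: algebra_simps power2_eq_square power3_eq_cube power4_eq_xxxx)

lemma bT: assumes "b \<ge> 1" shows "2*gg b (b+1) - 2*hh b (b+1)*WW b (b+1) = -(2*(b+2)*(5*b+12)/(b*(8*b+12)))"
  unfolding gg_def hh_def WW_def by (rule bT_atom) (use assms in simp_all)

lemma qgen1: fixes X y z n m u :: real assumes "u\<noteq>0" "m\<noteq>0" "z\<noteq>0"
  shows "(X + y*n/u)/(z*m/u) = (X*u+y*n)/(z*m)"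
  using assms by (simp add: field_simps)
lemma qgen2: fixes X y z n m u :: real assumes "u\<noteq>0" "m\<noteq>0" "z\<noteq>0"
  shows "(y*n/u)/(z*m/u) = y*n/(z*m)"
  using assms by (simp add: field_simps)

lemma stepA_real:
  fixes b a X y z y1 y2 z1 z2 yS zS :: real
  assumes b: "b \<ge> 1" and a: "0 \<le> a" "a \<le> b" and z: "z \<noteq> 0"
   and h0: "y1 = (3*b+3)*y/(3*b+3-a)" "y2 = (3*b+4)*y1/(3*b+4-a)" "z1 = (2*b+2)*z/(2*b+2-a)"
     "z2 = (2*b+3)*z1/(2*b+3-a)" "yS = y*(3*b+2-a)/(a+1)" "zS = z*(2*b+1-a)/(a+1)"
  shows "(8*X - 4*y - 2*y1 - y2)/z2 = 2*(b+2)/(b+1)*(X/z) +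
     (((2*b+2-(a+1))*vv b (a+1)*((X+yS)/zS) + gg b (a+1)*(yS/zS)) - ((2*b+2-a)*vv b a*(X/z) + gg b a*(y/z)))"
proof -
  have h: "y1 = y*(3*b+3)/(3*b+3-a)" "y2 = y1*(3*b+4)/(3*b+4-a)" "z1 = z*(2*b+2)/(2*b+2-a)"
     "z2 = z1*(2*b+3)/(2*b+3-a)" "yS = y*(3*b+2-a)/(a+1)" "zS = z*(2*b+1-a)/(a+1)"
    using h0 by (simp_all add: mult.commute)
  have nz: "3*b+3-a \<noteq> 0" "3*b+4-a \<noteq> 0" "3*b+2-a \<noteq> 0" "2*b+1-a \<noteq> 0" "2*b+2-a \<noteq> 0"
    "2*b+3-a \<noteq> 0" "2*b+3 \<noteq> 0" "b+1 \<noteq> 0" "b \<noteq> 0" "a+1 \<noteq> 0"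
    using b a by simp_all
  have g1: "(8*X - 4*y - 2*y1 - y2)/z2 = (8*X - (4 + 2*(3*b+3)/(3*b+3-a) + (3*b+4)*(3*b+3)/((3*b+4-a)*(3*b+3-a)))*y)
      * ((2*b+3-a)*(2*b+2-a)/(2*(2*b+3)*(b+1))) / z"
    using gen1[OF nz(1) nz(2) nz(5) nz(6) nz(7) nz(8) z refl refl h(1) h(2) h(3) h(4)] .
  have q1: "(X+yS)/zS = (X*(a+1)+y*(3*b+2-a))/(z*(2*b+1-a))"
    unfolding h(5) h(6) by (rule qgen1) (use nz z in simp_all)
  have q2: "yS/zS = y*(3*b+2-a)/(z*(2*b+1-a))"
    unfolding h(5) h(6) by (rule qgen2) (use nz z in simp_all)
  have v1: "(2*b+2-(a+1))*vv b (a+1) = (2*b+1-a)*((2*a-6*b-8)/((2*b+3)*(b+1)))"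
    unfolding vv_def by (simp add: algebra_simps)
  have v0: "(2*b+2-a)*vv b a = (2*b+2-a)*((2*a-6*b-10)/((2*b+3)*(b+1)))"
    unfolding vv_def by simp
  have e1: "3*b+3-(a+1) = 3*b+2-a" "3*b+4-(a+1) = 3*b+3-a" "2*b+2-(a+1) = 2*b+1-a" by simp_all
  have g1': "gg b (a+1) = (2*b+1-a)*NQ b (a+1)/(2*b*(b+1)*(2*b+3)*(3*b+2-a)*(3*b+3-a))"
    unfolding gg_def e1 ..
  have g0': "gg b a = (2*b+2-a)*NQ b a/(2*b*(b+1)*(2*b+3)*(3*b+3-a)*(3*b+4-a))"
    unfolding gg_def ..
  have hA: "8*((2*b+3-a)*(2*b+2-a)/(2*(2*b+3)*(b+1))) - 2*(b+2)/(b+1)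
      = ((2*b+1-a)*((2*a-6*b-8)/((2*b+3)*(b+1))))*(a+1)/(2*b+1-a) - (2*b+2-a)*((2*a-6*b-10)/((2*b+3)*(b+1)))"
    by (rule cA) (use nz in simp_all)
  have hB: "-((2*b+3-a)*(2*b+2-a)/(2*(2*b+3)*(b+1))) * (4 + 2*(3*b+3)/(3*b+3-a) + (3*b+4)*(3*b+3)/((3*b+4-a)*(3*b+3-a)))
     = ((2*b+1-a)*((2*a-6*b-8)/((2*b+3)*(b+1))))*(3*b+2-a)/(2*b+1-a)
       + ((2*b+1-a)*NQ b (a+1)/(2*b*(b+1)*(2*b+3)*(3*b+2-a)*(3*b+3-a)))*(3*b+2-a)/(2*b+1-a)
       - (2*b+2-a)*NQ b a/(2*b*(b+1)*(2*b+3)*(3*b+3-a)*(3*b+4-a))"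
    by (rule cB) (use nz in simp_all)
  show ?thesis unfolding g1 q1 q2 v1 v0 g1' g0'
    by (rule comb[OF z nz(4) hA hB])
qed


definition QQ :: "nat \<Rightarrow> nat \<Rightarrow> real" where
  "QQ n j = pp (3*n+2) j / real ((2*n+1) choose j)"
definition TT :: "nat \<Rightarrow> nat \<Rightarrow> real" where
  "TT n j = real ((3*n+2) choose j) / real ((2*n+1) choose j)"
definition EEn :: "nat \<Rightarrow> nat \<Rightarrow> real" where
  "EEn n j = (2*real n+2-real j)*vv (real n) (real j) * QQ n j + gg (real n) (real j) * TT n j"

lemma stepA: assumes n1: "1 \<le> n" and jn: "j \<le> n"
  shows "QQ (Suc n) j = 2*(real n+2)/(real n+1) * QQ n j + (EEn n (Suc j) - EEn n j)"
proof -
  define N where "N = 3*n+2"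
  define M where "M = 2*n+1"
  have jN: "j \<le> N" "j < N" "j \<le> M" "j < M" "j \<le> Suc N" "j \<le> Suc M" using jn by (simp_all add: N_def M_def)
  have z: "real (M choose j) \<noteq> 0" using jN by simp
  have rN1: "real N + 1 = 3*real n+3" and rN2: "real (Suc N) + 1 = 3*real n + 4" and rN: "real N = 3*real n+2"
    and rM1: "real M + 1 = 2*real n+2" and rM2: "real (Suc M)+1 = 2*real n+3" and rM: "real M = 2*real n+1"
    by (simp_all add: N_def M_def)
  have e1: "3*Suc n+2 = N+3" "2*Suc n+1 = Suc (Suc M)" by (simp_all add: N_def M_def)
  have rs: "real (Suc j) = real j + 1" by simp
  have H: "(8*pp N j - 4*real (N choose j) - 2*real (Suc N choose j) - real (Suc (Suc N) choose j))/real (Suc (Suc M) choose j)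
     = 2*(real n+2)/(real n+1)*(pp N j/real (M choose j)) +
     (((2*real n+2-(real j+1))*vv (real n) (real j+1)*((pp N j+real (N choose Suc j))/real (M choose Suc j)) + gg (real n) (real j+1)*(real (N choose Suc j)/real (M choose Suc j)))
      - ((2*real n+2-real j)*vv (real n) (real j)*(pp N j/real (M choose j)) + gg (real n) (real j)*(real (N choose j)/real (M choose j))))"
    by (rule stepA_real[OF _ _ _ z B1[OF jN(1), unfolded rN1] B1[OF jN(5), unfolded rN2] B1[OF jN(3), unfolded rM1]
         B1[OF jN(6), unfolded rM2] B2[OF jN(2), unfolded rN] B2[OF jN(4), unfolded rM]]) (use n1 jn in simp_all)
  show ?thesis
    unfolding QQ_def EEn_def TT_def e1 pp3 pp_Suc_j rs N_def[symmetric] M_def[symmetric]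
    using H by simp
qed


lemma fin:
  fixes b X y z T v1 v0 g1 g0 h1 W1 K0 KT :: real
  assumes z: "z \<noteq> 0" and yz: "y/z = 2*T"
    and hX: "(b+1)*v1 + 8*W1 = 0" and hC: "-(2*b+2)*v0 - g0 = K0" and hT: "2*g1 - 2*h1*W1 = KT"
  shows "((b+1)*v1*(X/z) + g1*(y/z)) - ((2*b+2)*v0 + g0) + (8*X - h1*y)*W1/z = K0 + KT*T"
proof -
  have "((b+1)*v1*(X/z) + g1*(y/z)) - ((2*b+2)*v0 + g0) + (8*X - h1*y)*W1/z
     = X/z*((b+1)*v1 + 8*W1) + (y/z)*(g1 - h1*W1) + (-(2*b+2)*v0 - g0)"
    using z by (simp add: field_simps)
  also have "\<dots> = K0 + KT*T" unfolding hX hC yz hT[symmetric] by (simp add: algebra_simps)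
  finally show ?thesis .
qed

lemma Kgen: fixes u v w b T :: real shows "u/b*(1 - v/w*T) = u/b + (-(u*v/(b*w)))*T"
proof -
  have "u*v/(b*w) = u/b*(v/w)" by simp
  then show ?thesis by (simp add: algebra_simps)
qed

lemma stepB: assumes n1: "1 \<le> n"
  shows "EEn n (Suc n) - EEn n 0 + QQ (Suc n) (Suc n) = 2*(real n+2)/real n*(1 - (5*real n+12)/(8*real n+12)*TT n n)"
proof -
  define N where "N = 3*n+2"
  define M where "M = 2*n+1"
  define b where "b = real n"
  have jN: "Suc n \<le> N" "n < N" "Suc n \<le> M" "n < M" "Suc n \<le> Suc N" "Suc n \<le> Suc M" using n1 by (simp_all add: N_def M_def)
  have z: "real (M choose Suc n) \<noteq> 0" "real (M choose n) \<noteq> 0" using jN by simp_all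
  have b1: "b \<ge> 1" using n1 by (simp add: b_def)
  have rn: "real (Suc n) = b+1" by (simp add: b_def)
  have rN1: "real N + 1 = 3*b+3" and rN2: "real (Suc N) + 1 = 3*b + 4" and rN: "real N = 3*b+2"
    and rM1: "real M + 1 = 2*b+2" and rM2: "real (Suc M)+1 = 2*b+3" and rM: "real M = 2*b+1"
    by (simp_all add: N_def M_def b_def)
  have e1: "3*Suc n+2 = N+3" "2*Suc n+1 = Suc (Suc M)" by (simp_all add: N_def M_def)
  have nz: "3*b+3-(b+1) \<noteq> 0" "3*b+4-(b+1) \<noteq> 0" "2*b+2-(b+1) \<noteq> 0" "2*b+3-(b+1) \<noteq> 0" "2*b+3 \<noteq> 0" "b+1 \<noteq> 0"
    using b1 by simp_all
  have G: "(8*pp N (Suc n) - 4*real (N choose Suc n) - 2*real (Suc N choose Suc n) - real (Suc (Suc N) choose Suc n))/real (Suc (Suc M) choose Suc n)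
     = (8*pp N (Suc n) - hh b (b+1) * real (N choose Suc n)) * WW b (b+1) / real (M choose Suc n)"
    unfolding hh_def WW_def
    by (rule gen1[OF nz(1) nz(2) nz(3) nz(4) nz(5) nz(6) z(1) refl refl])
     (rule B1c[OF jN(1), unfolded rN1 rn] B1c[OF jN(5), unfolded rN2 rn] B1c[OF jN(3), unfolded rM1 rn] B1c[OF jN(6), unfolded rM2 rn])+
  have t1: "3*b+2-b = 2*(b+1)" "2*b+1-b = b+1" by simp_all
  have yS0: "real (N choose Suc n) = real (N choose n) * (3*b+2-b)/(b+1)"
    using B2[OF jN(2), unfolded rN] unfolding b_def .
  have zS0: "real (M choose Suc n) = real (M choose n) * (2*b+1-b)/(b+1)"
    using B2[OF jN(4), unfolded rM] unfolding b_def .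
  have yS: "real (N choose Suc n) = 2 * real (N choose n)"
    unfolding yS0 t1 mult.assoc[symmetric] nonzero_mult_div_cancel_right[OF nz(6)] by simp
  have zS: "real (M choose Suc n) = real (M choose n)"
    unfolding zS0 t1 nonzero_mult_div_cancel_right[OF nz(6)] ..
  have yz: "real (N choose Suc n) / real (M choose Suc n) = 2 * TT n n"
    unfolding yS zS TT_def N_def[symmetric] M_def[symmetric] by simp
  have E0: "EEn n 0 = (2*b+2)*vv b 0 + gg b 0"
    unfolding EEn_def QQ_def TT_def by (simp add: pp_0 b_def)
  have E1: "EEn n (Suc n) = (b+1)*vv b (b+1)*(pp N (Suc n)/real (M choose Suc n)) + gg b (b+1)*(real (N choose Suc n)/real (M choose Suc n))"
    unfolding EEn_def QQ_def TT_def rn N_def[symmetric] M_def[symmetric] b_def[symmetric] by simp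
  have Q1: "QQ (Suc n) (Suc n) = (8*pp N (Suc n) - hh b (b+1) * real (N choose Suc n)) * WW b (b+1) / real (M choose Suc n)"
    unfolding QQ_def e1 pp3 G[symmetric] ..
  have K: "2*(b+2)/b*(1 - (5*b+12)/(8*b+12)*TT n n) = 2*(b+2)/b + (-(2*(b+2)*(5*b+12)/(b*(8*b+12))))*TT n n"
    by (rule Kgen)
  show ?thesis
    unfolding E0 E1 Q1 b_def[symmetric] K
    by (rule fin[OF z(1) yz bX[OF b1] bC[OF b1] bT[OF b1]])
qed


definition SS :: "nat \<Rightarrow> real" where "SS n = (\<Sum>j=0..n. QQ n j)"

lemma SS_rec: assumes n1: "1 \<le> n"
  shows "SS (Suc n) = 2*(real n+2)/(real n+1)*SS n + 2*(real n+2)/real n*(1 - (5*real n+12)/(8*real n+12)*TT n n)"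
proof -
  have "SS (Suc n) = (\<Sum>j=0..n. QQ (Suc n) j) + QQ (Suc n) (Suc n)" by (simp add: SS_def)
  also have "(\<Sum>j=0..n. QQ (Suc n) j) = (\<Sum>j=0..n. 2*(real n+2)/(real n+1) * QQ n j + (EEn n (Suc j) - EEn n j))"
    by (rule sum.cong[OF refl], rule stepA[OF n1], simp)
  also have "\<dots> = 2*(real n+2)/(real n+1) * SS n + (EEn n (Suc n) - EEn n 0)"
    by (simp add: sum.distrib sum_distrib_left SS_def sum_Suc_diff)
  finally show ?thesis using stepB[OF n1] by simp
qed

lemma divgen: fixes p q b S G :: real assumes "p \<noteq> 0"
  shows "(2*p/q*S + 2*p/b*G)/p = 2*(S/q) + 2/b*G"
  using assms by (simp add: field_simps)

lemma main_ind: assumes "1 \<le> n"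
  shows "SS n / (real n + 1) = 2 ^ n * (3/4 + (\<Sum>k=1..n-1. (1 / (2 ^ k * real k)) *
            (1 - ((5 * real k + 12) / (8 * real k + 12)) *
                 (real ((3*k+2) choose k) / real ((2*k+1) choose k)))))"
  using assms
proof (induction n rule: nat_induct_at_least)
  case base
  have "SS 1 = 3" by (simp add: SS_def QQ_def pp_def)
  then show ?case by simp
next
  case (Suc n)
  define F where "F = (\<lambda>k::nat. (1 / (2 ^ k * real k)) *
            (1 - ((5 * real k + 12) / (8 * real k + 12)) *
                 (real ((3*k+2) choose k) / real ((2*k+1) choose k))))"
  define G where "G = 1 - (5*real n+12)/(8*real n+12)*TT n n"
  have FG: "F n = 1/(2^n*real n) * G" unfolding F_def G_def TT_def by simp
  have sp: "(\<Sum>k=1..n. F k) = (\<Sum>k=1..n-1. F k) + F n"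
    using Suc.hyps by (cases n) auto
  have IH: "SS n / (real n + 1) = 2 ^ n * (3/4 + (\<Sum>k=1..n-1. F k))" using Suc.IH unfolding F_def .
  have p: "real n + 2 \<noteq> 0" by simp
  have "SS (Suc n) / (real (Suc n) + 1) = (2*(real n+2)/(real n+1)*SS n + 2*(real n+2)/real n*G)/(real n+2)"
    unfolding SS_rec[OF Suc.hyps] G_def by simp
  also have "\<dots> = 2*(SS n/(real n+1)) + 2/real n*G" by (rule divgen[OF p])
  also have "\<dots> = 2 ^ Suc n * (3/4 + (\<Sum>k=1..Suc n - 1. F k))"
    unfolding diff_Suc_1 IH sp FG using Suc.hyps by (simp add: algebra_simps)
  finally show ?case unfolding F_def .
qed

theorem mainTheorem10:
  fixes n :: nat
  assumes "n \<ge> 1"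
  shows "(1 / (real n + 1)) * (\<Sum>j=0..n. \<Sum>i=0..j.
            real ((3*n+2) choose i) / real ((2*n+1) choose j))
       = 2 ^ n * (3/4 + (\<Sum>k=1..n-1. (1 / (2 ^ k * real k)) *
            (1 - ((5 * real k + 12) / (8 * real k + 12)) *
                 (real ((3*k+2) choose k) / real ((2*k+1) choose k)))))"
proof -
  have "(\<Sum>j=0..n. \<Sum>i=0..j. real ((3*n+2) choose i) / real ((2*n+1) choose j)) = SS n"
    unfolding SS_def QQ_def pp_def by (simp add: sum_divide_distrib)
  then show ?thesis using main_ind[OF assms] by simp
qed

end
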